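(* For every $s\in(0,1]$ there exist $\rho>0$ and a von Mangoldt plane $M_m$ such that $m'(r)=s$ for all $r\in[\rho,\infty)$.
   Context: For a smooth function $m\colon[0,\infty)\to[0,\infty)$ with $m(0)=0$, $m'(0)=1$, $m>0$ on $(0,\infty)$ and whose odd extension to $\mathbb R$ is smooth, $M_m$ is $\mathbb R^2$ with the complete smooth metric $dr^2+m(r)^2d\theta^2$ in polar coordinates, curvature $G_m=-m''/m$; $M_m$ is a von Mangoldt plane if $G_m$ is a non-increasing function of $r$. *)

theory Defs
  imports "HOL-Analysis.Analysis"
begin

definition smooth_real :: "(real \<Rightarrow> real) \<Rightarrow> bool" where
  "smooth_real f \<longleftrightarrow> (\<forall>k::nat. \<forall>x. ((deriv ^^ k) f) differentiable (at x))"

definition odd_ext :: "(real \<Rightarrow> real) \<Rightarrow> real \<Rightarrow> real" where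
  "odd_ext m x = (if x \<ge> 0 then m x else - m (- x))"

text \<open>Admissible warping functions m: smooth on [0,infinity) (with smooth odd
  extension), m(0)=0, m'(0)=1, m>0 on (0,infinity). Only the values of m on
  [0,infinity) matter. Derivatives of m are taken via the odd extension.\<close>
definition admissible_m :: "(real \<Rightarrow> real) \<Rightarrow> bool" where
  "admissible_m m \<longleftrightarrow>
     smooth_real (odd_ext m) \<and> m 0 = 0 \<and> deriv (odd_ext m) 0 = 1 \<and>
     (\<forall>r>0. m r > 0)"

text \<open>Curvature G_m = - m''/m of the metric dr^2 + m(r)^2 dtheta^2 (for r>0).\<close>
definition curv_G :: "(real \<Rightarrow> real) \<Rightarrow> real \<Rightarrow> real" where
  "curv_G m r = - deriv (deriv (odd_ext m)) r / m r"

definition von_mangoldt :: "(real \<Rightarrow> real) \<Rightarrow> bool" where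
  "von_mangoldt m \<longleftrightarrow> admissible_m m \<and>
     (\<forall>r1 r2. 0 < r1 \<longrightarrow> r1 \<le> r2 \<longrightarrow> curv_G m r2 \<le> curv_G m r1)"

end

theory Submission
  imports Defs "HOL-Computational_Algebra.Polynomial"
begin


fun Ck :: "nat \<Rightarrow> (real \<Rightarrow> real) \<Rightarrow> bool" where
  "Ck 0 f = (\<forall>x. f differentiable at x)"
| "Ck (Suc n) f = ((\<forall>x. f differentiable at x) \<and> Ck n (deriv f))"

lemma Ck_iff: "Ck n f \<longleftrightarrow> (\<forall>k\<le>n. \<forall>x. ((deriv ^^ k) f) differentiable at x)"
proof (induction n arbitrary: f)
  case 0 then show ?case by simp
next
  case (Suc n)
  have e: "(deriv ^^ Suc k) f = (deriv ^^ k) (deriv f)" for k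
    by (simp only: funpow_Suc_right o_apply)
  have "(\<forall>k\<le>Suc n. \<forall>x. ((deriv ^^ k) f) differentiable at x) \<longleftrightarrow>
        (\<forall>x. f differentiable at x) \<and> (\<forall>k\<le>n. \<forall>x. ((deriv ^^ k) (deriv f)) differentiable at x)"
  proof (intro iffI conjI allI impI)
    assume H: "\<forall>k\<le>Suc n. \<forall>x. ((deriv ^^ k) f) differentiable at x"
    fix x show "f differentiable at x" using H[rule_format, of 0] by simp
  next
    fix k x assume H: "\<forall>k\<le>Suc n. \<forall>x. ((deriv ^^ k) f) differentiable at x" and k: "k \<le> n"
    show "((deriv ^^ k) (deriv f)) differentiable at x" using H[rule_format, of "Suc k" x] k e by simp
  next
    fix k x assume H: "(\<forall>x. f differentiable at x) \<and> (\<forall>k\<le>n. \<forall>x. ((deriv ^^ k) (deriv f)) differentiable at x)"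
      and k: "k \<le> Suc n"
    show "((deriv ^^ k) f) differentiable at x"
    proof (cases k)
      case 0 then show ?thesis using H by simp
    next
      case (Suc j) then show ?thesis using H k e by simp
    qed
  qed
  then show ?case using Suc by simp
qed

lemma smooth_Ck: "smooth_real f \<longleftrightarrow> (\<forall>n. Ck n f)"
  unfolding smooth_real_def Ck_iff by auto

lemma Ck_diff: "Ck n f \<Longrightarrow> f differentiable at x"
  by (cases n) auto

lemma Ck_mono: "Ck (Suc n) f \<Longrightarrow> Ck n f"
  by (induction n arbitrary: f) auto

lemma Ck_SucI:
  assumes "\<And>x. (f has_real_derivative f' x) (at x)" "Ck n f'"
  shows "Ck (Suc n) f"
proof -
  have "deriv f = f'" using assms(1) DERIV_imp_deriv by blast
  moreover have "\<And>x. f differentiable at x" using assms(1) real_differentiable_def by blast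
  ultimately show ?thesis using assms(2) by simp
qed

lemma Ck_deriv: "Ck (Suc n) f \<Longrightarrow> (f has_real_derivative deriv f x) (at x)"
  by (simp add: DERIV_deriv_iff_real_differentiable)

lemma Ck_const: "Ck n (\<lambda>x. c)"
proof (induction n arbitrary: c)
  case 0 then show ?case by simp
next
  case (Suc n) show ?case by (rule Ck_SucI[where f'="\<lambda>x. 0"]) (auto simp: Suc)
qed

lemma Ck_id: "Ck n (\<lambda>x. x)"
proof (cases n)
  case 0 then show ?thesis by simp
next
  case (Suc m) then show ?thesis by (simp add: Ck_SucI[where f'="\<lambda>x. 1"] Ck_const)
qed

lemma Ck_add: "Ck n f \<Longrightarrow> Ck n g \<Longrightarrow> Ck n (\<lambda>x. f x + g x)"
proof (induction n arbitrary: f g)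
  case 0 then show ?case by simp
next
  case (Suc n)
  have "\<And>x. ((\<lambda>x. f x + g x) has_real_derivative deriv f x + deriv g x) (at x)"
    using Suc.prems by (intro DERIV_add Ck_deriv)
  moreover have "Ck n (\<lambda>x. deriv f x + deriv g x)" using Suc by simp
  ultimately show ?case by (rule Ck_SucI)
qed

lemma Ck_mult: "Ck n f \<Longrightarrow> Ck n g \<Longrightarrow> Ck n (\<lambda>x. f x * g x)"
proof (induction n arbitrary: f g)
  case 0 then show ?case by simp
next
  case (Suc n)
  have "\<And>x. ((\<lambda>x. f x * g x) has_real_derivative f x * deriv g x + deriv f x * g x) (at x)"
    using Suc.prems by (metis DERIV_mult' Ck_deriv)
  moreover have "Ck n (\<lambda>x. f x * deriv g x + deriv f x * g x)"
    using Suc.prems Ck_mono by (intro Ck_add Suc.IH) auto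
  ultimately show ?case by (rule Ck_SucI)
qed

lemma Ck_comp: "Ck n f \<Longrightarrow> Ck n g \<Longrightarrow> Ck n (\<lambda>x. f (g x))"
proof (induction n arbitrary: f g)
  case 0
  have "(f \<circ> g) differentiable at x" for x
    using 0 by (intro differentiable_chain_at) simp_all
  then show ?case by (simp add: o_def)
next
  case (Suc n)
  have "\<And>x. ((\<lambda>x. f (g x)) has_real_derivative deriv f (g x) * deriv g x) (at x)"
    using Suc.prems by (metis DERIV_chain2 Ck_deriv)
  moreover have "Ck n (\<lambda>x. deriv f (g x))"
  proof -
    have a: "Ck n (deriv f)" using Suc.prems(1) by simp
    have b: "Ck n g" using Suc.prems(2) by (rule Ck_mono)
    show ?thesis using Suc.IH[OF a b] .
  qed
  moreover have "Ck n (deriv g)"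
    using Suc.prems by simp
  ultimately show ?case by (intro Ck_SucI[where f'="\<lambda>x. deriv f (g x) * deriv g x"] Ck_mult)
qed

lemma smoothI: "(\<And>n. Ck n f) \<Longrightarrow> smooth_real f" by (simp add: smooth_Ck)



definition Ep :: "real poly \<Rightarrow> real \<Rightarrow> real" where
  "Ep p x = (if x > 0 then poly p (1/x) * exp (-1/x) else 0)"

definition qp :: "real poly \<Rightarrow> real poly" where
  "qp p = [:0,0,1:] * (p - pderiv p)"

lemma poly_exp_lim: "((\<lambda>y::real. poly r y / exp y) \<longlongrightarrow> 0) at_top"
proof -
  have "((\<lambda>y. coeff r i * (y ^ i / exp y)) \<longlongrightarrow> 0) at_top" for i
    using tendsto_mult[OF tendsto_const[of "coeff r i"] tendsto_power_div_exp_0[of i]] by simp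
  then have "((\<lambda>y. \<Sum>i\<le>degree r. coeff r i * (y ^ i / exp y)) \<longlongrightarrow> 0) at_top"
    by (intro tendsto_null_sum)
  moreover have "(\<Sum>i\<le>degree r. coeff r i * (y ^ i / exp y)) = poly r y / exp y" for y
    by (simp add: poly_altdef sum_divide_distrib)
  ultimately show ?thesis by simp
qed

lemma Ep_lim0: "((\<lambda>y. Ep p y / y) \<longlongrightarrow> 0) (at (0::real))"
  unfolding filterlim_at_split
proof
  show "((\<lambda>y. Ep p y / y) \<longlongrightarrow> 0) (at_left 0)"
  proof (rule tendsto_eventually)
    show "\<forall>\<^sub>F y in at_left 0. Ep p y / y = 0"
      using eventually_at_left_real[of "-1" 0] by (auto elim!: eventually_mono simp: Ep_def)
  qed
next
  show "((\<lambda>y. Ep p y / y) \<longlongrightarrow> 0) (at_right 0)"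
    unfolding filterlim_at_right_to_top
  proof (rule Lim_transform_eventually[OF poly_exp_lim[of "[:0,1:] * p"]])
    show "\<forall>\<^sub>F x in at_top. poly ([:0, 1:] * p) x / exp x = Ep p (inverse x) / inverse x"
      using eventually_gt_at_top[of 0]
      by eventually_elim (simp add: Ep_def exp_minus field_simps)
  qed
qed

lemma Ep_deriv: "(Ep p has_real_derivative Ep (qp p) x) (at x)"
proof (cases "x = 0")
  case True
  have "((\<lambda>y. (Ep p y - Ep p 0) / (y - 0)) \<longlongrightarrow> 0) (at 0)"
    using Ep_lim0[of p] by (simp add: Ep_def)
  then show ?thesis using True by (simp add: has_field_derivative_iff Ep_def)
next
  case False
  show ?thesis
  proof (cases "x > 0")
    case True
    have d: "((\<lambda>x. poly p (1/x) * exp (-1/x)) has_real_derivative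
       poly (pderiv p) (1/x) * (- 1 / x^2) * exp (-1/x) + poly p (1/x) * (exp (-1/x) * (1/x^2))) (at x)"
    proof -
      have h1: "((\<lambda>x. 1/x) has_real_derivative -1/x^2) (at x)"
        using True DERIV_inverse[of x] by (simp add: inverse_eq_divide power2_eq_square)
      have h2: "((\<lambda>x. -1/x) has_real_derivative 1/x^2) (at x)"
        using DERIV_minus[OF h1] by simp
      have h3: "((\<lambda>x. poly p (1/x)) has_real_derivative poly (pderiv p) (1/x) * (-1/x^2)) (at x)"
        by (rule DERIV_chain2[OF poly_DERIV h1])
      have h4: "((\<lambda>x. exp (-1/x)) has_real_derivative exp (-1/x) * (1/x^2)) (at x)"
        by (rule DERIV_chain2[OF DERIV_exp h2])
      show ?thesis using DERIV_mult'[OF h3 h4] by (simp add: algebra_simps)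
    qed
    have v: "poly (pderiv p) (1/x) * (- 1 / x^2) * exp (-1/x) + poly p (1/x) * (exp (-1/x) * (1/x^2))
        = Ep (qp p) x"
      using True by (simp add: Ep_def qp_def field_simps power2_eq_square)
    have "eventually (\<lambda>y. Ep p y = poly p (1/y) * exp (-1/y)) (nhds x)"
      using eventually_nhds_in_open[of "{0<..}" x] True
      by (auto elim!: eventually_mono simp: Ep_def)
    from DERIV_cong_ev[OF refl this v[symmetric]] d show ?thesis by simp
  next
    case False
    with \<open>x \<noteq> 0\<close> have x: "x < 0" by simp
    have ev: "eventually (\<lambda>y. Ep p y = 0) (nhds x)"
      using eventually_nhds_in_open[of "{..<0}" x] x
      by (auto elim!: eventually_mono simp: Ep_def)
    moreover have "Ep (qp p) x = 0" using x by (simp add: Ep_def)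
    ultimately show ?thesis using DERIV_cong_ev[OF refl ev, of _ 0] by simp
  qed
qed

lemma Ck_Ep: "Ck n (Ep p)"
proof (induction n arbitrary: p)
  case 0 then show ?case using Ep_deriv real_differentiable_def by auto
next
  case (Suc n) then show ?case by (intro Ck_SucI[OF Ep_deriv]) 
qed



abbreviation "E \<equiv> Ep 1"
abbreviation "E1 \<equiv> Ep (qp 1)"
abbreviation "E2 \<equiv> Ep (qp (qp 1))"

lemma qp1: "poly (qp 1) y = y^2"
  by (simp add: qp_def power2_eq_square)

lemma qp2: "poly (qp (qp 1)) y = y^3 * (y - 2)"
  by (simp add: qp_def pderiv_pCons pderiv_mult algebra_simps power3_eq_cube power2_eq_square)

lemma E_nonneg: "E x \<ge> 0" by (simp add: Ep_def)
lemma E1_nonneg: "E1 x \<ge> 0" by (simp add: Ep_def qp1)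
lemma E_half: "E (1/2) = exp (-2)" by (simp add: Ep_def)
lemma E_nonpos: "x \<le> 0 \<Longrightarrow> E x = 0" by (simp add: Ep_def)

lemma E_mono: "x \<le> y \<Longrightarrow> E x \<le> E y"
  by (rule DERIV_nonneg_imp_nondecreasing) (use Ep_deriv E1_nonneg in blast)+

lemma E2_nonneg: "x \<le> 1/2 \<Longrightarrow> E2 x \<ge> 0"
proof (cases "x > 0")
  case True
  assume h: "x \<le> 1/2"
  have "1/x \<ge> 2" using True h by (simp add: field_simps)
  then have "poly (qp (qp 1)) (1/x) \<ge> 0" unfolding qp2 using True by simp
  then show ?thesis using True by (simp add: Ep_def)
qed (simp add: Ep_def)

lemma E1_mono: "x \<le> y \<Longrightarrow> y \<le> 1/2 \<Longrightarrow> E1 x \<le> E1 y"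
  by (rule DERIV_nonneg_imp_nondecreasing) (use Ep_deriv E2_nonneg in force)+

lemma global_antideriv:
  fixes f :: "real \<Rightarrow> real"
  assumes cf: "continuous_on UNIV f"
  shows "\<exists>R. (\<forall>x. (R has_real_derivative f x) (at x)) \<and> R 0 = 0"
proof -
  define R where "R u = integral {0..u} f - integral {u..0} f" for u
  have int: "f integrable_on {a..b}" for a b
    by (rule integrable_continuous_real) (use cf continuous_on_subset in blast)
  have key: "R v = integral {a..v} f - integral {a..0} f" if "a \<le> v" "a \<le> 0" for a v
  proof (cases "v \<ge> 0")
    case True
    have "integral {a..0} f + integral {0..v} f = integral {a..v} f"
      using Henstock_Kurzweil_Integration.integral_combine[where a=a and c=0 and b=v and f=f] that True int by auto
    moreover have "integral {v..0} f = 0" using True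
      by (cases "v = 0") auto
    ultimately show ?thesis unfolding R_def by simp
  next
    case False
    have "integral {a..v} f + integral {v..0} f = integral {a..0} f"
      using Henstock_Kurzweil_Integration.integral_combine[where a=a and c=v and b=0 and f=f] that False int by auto
    moreover have "integral {0..v} f = 0" using False by auto
    ultimately show ?thesis unfolding R_def by simp
  qed
  have "(R has_real_derivative f x) (at x)" for x
  proof -
    define a where "a = min 0 x - 1"
    define b where "b = x + 1"
    have ab: "a < x" "x < b" "a \<le> 0" unfolding a_def b_def by auto
    have "((\<lambda>u. integral {a..u} f) has_real_derivative f x) (at x within {a..b})"
      by (rule integral_has_real_derivative) (use ab cf continuous_on_subset in auto)
    then have "((\<lambda>u. integral {a..u} f) has_real_derivative f x) (at x within {a<..<b})"
      by (rule DERIV_subset) auto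
    then have d: "((\<lambda>u. integral {a..u} f) has_real_derivative f x) (at x)"
      using at_within_open[of x "{a<..<b}"] ab by auto
    have d2: "((\<lambda>u. integral {a..u} f - integral {a..0} f) has_real_derivative f x) (at x)"
      using DERIV_diff[OF d DERIV_const[of "integral {a..0} f"]] by simp
    have eq: "\<And>u. u \<in> {a<..<b} \<Longrightarrow> integral {a..u} f - integral {a..0} f = R u"
      using key[of a] ab by force
    show ?thesis
      by (rule has_field_derivative_transform_within_open[OF d2 open_greaterThanLessThan _ eq]) (use ab in auto)
  qed
  moreover have "R 0 = 0" unfolding R_def by simp
  ultimately show ?thesis by blast
qed



theorem theorem1p11:
  fixes s :: real
  assumes "0 < s" and "s \<le> 1"
  shows "\<exists>\<rho>>0. \<exists>m. von_mangoldt m \<and> (\<forall>r\<ge>\<rho>. deriv (odd_ext m) r = s)"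
proof -
  have s0: "0 < s" and s1: "s \<le> 1" using assms by auto
  define c where "c = (1 - s) / E (1/2)"
  have Eh: "E (1/2) > 0" by (simp add: E_half)
  have c0: "c \<ge> 0" unfolding c_def using s1 Eh by simp
  have cE: "c * E (1/2) = 1 - s" unfolding c_def using Eh by simp
  define g where "g u = 1/2 + (-1/2) * (u * u)" for u :: real
  define F where "F u = s + c * E (g u)" for u
  define F' where "F' u = c * (E1 (g u) * (-u))" for u
  have g_le: "g u \<le> 1/2" for u unfolding g_def by simp
  have F_ge: "F u \<ge> s" for u unfolding F_def using c0 E_nonneg by simp
  have F_le: "F u \<le> 1" for u
  proof -
    have "c * E (g u) \<le> c * E (1/2)" using c0 E_mono[OF g_le] by (rule mult_left_mono[rotated])
    then show ?thesis unfolding F_def using cE by simp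
  qed
  have F_pos: "F u > 0" for u using F_ge[of u] s0 by simp
  have F_even: "F (-u) = F u" for u unfolding F_def g_def by simp
  have dg: "(g has_real_derivative -u) (at u)" for u
  proof -
    have "((\<lambda>u. 1/2 + (-1/2) * (u * u)) has_real_derivative 0 + (-1/2) * (u * 1 + 1 * u)) (at u)"
      by (intro DERIV_add DERIV_const DERIV_cmult DERIV_mult' DERIV_ident)
    then show ?thesis unfolding g_def[abs_def] by simp
  qed
  have dF: "(F has_real_derivative F' u) (at u)" for u
  proof -
    have "((\<lambda>u. E (g u)) has_real_derivative E1 (g u) * (-u)) (at u)"
      by (rule DERIV_chain2[OF Ep_deriv dg])
    then have "((\<lambda>u. s + c * E (g u)) has_real_derivative 0 + c * (E1 (g u) * (-u))) (at u)"
      by (intro DERIV_add DERIV_cmult DERIV_const)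
    then show ?thesis unfolding F_def[abs_def] F'_def by simp
  qed
  have CkF: "Ck n F" for n
  proof -
    have "Ck n (\<lambda>u. u * u)" by (rule Ck_mult[OF Ck_id Ck_id])
    then have "Ck n (\<lambda>u. (-1/2) * (u * u))" by (rule Ck_mult[OF Ck_const])
    then have "Ck n (\<lambda>u. 1/2 + (-1/2) * (u * u))" by (rule Ck_add[OF Ck_const])
    then have "Ck n g" unfolding g_def[abs_def] .
    then have "Ck n (\<lambda>u. E (g u))" by (rule Ck_comp[OF Ck_Ep])
    then have "Ck n (\<lambda>u. c * E (g u))" by (rule Ck_mult[OF Ck_const])
    then have "Ck n (\<lambda>u. s + c * E (g u))" by (rule Ck_add[OF Ck_const])
    then show ?thesis unfolding F_def[abs_def] .
  qed
  have contF: "continuous_on UNIV (\<lambda>u. 1 / F u)"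
  proof -
    have "isCont F u" for u using dF DERIV_isCont by blast
    then have "isCont (\<lambda>u. 1 / F u) u" for u using F_pos[of u] by (intro continuous_intros) (auto simp del: F_pos)
    then show ?thesis by (simp add: continuous_at_imp_continuous_on)
  qed
  obtain R where dR: "\<And>x. (R has_real_derivative 1 / F x) (at x)" and R0: "R 0 = 0"
    using global_antideriv[OF contF] by blast
  have contR: "isCont R x" for x using dR DERIV_isCont by blast
  have R_odd: "R (-u) = - R u" for u
  proof -
    have "((\<lambda>u. R u + R (-u)) has_real_derivative 0) (at x)" for x
    proof -
      have "((\<lambda>u. R (-u)) has_real_derivative 1 / F (-x) * (-1)) (at x)"
        by (rule DERIV_chain2[OF dR]) (auto intro!: derivative_eq_intros)
      from DERIV_add[OF dR this] show ?thesis using F_even by simp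
    qed
    then have "R u + R (-u) = R 0 + R (-0)" by (rule DERIV_isconst_all[rule_format])
    then show ?thesis using R0 by simp
  qed
  have R_gap: "R b - b \<ge> R a - a" if "a \<le> b" for a b
  proof (rule DERIV_nonneg_imp_nondecreasing[OF that])
    fix x
    have "((\<lambda>u. R u - u) has_real_derivative 1 / F x - 1) (at x)"
      by (intro DERIV_diff dR DERIV_ident)
    moreover have "1 / F x - 1 \<ge> 0" using F_le[of x] F_pos[of x] by (simp add: field_simps)
    ultimately show "\<exists>y. ((\<lambda>u. R u - u) has_real_derivative y) (at x) \<and> 0 \<le> y" by blast
  qed
  have R_strict: "R a < R b" if "a < b" for a b using R_gap[of a b] that by simp
  have "strict_mono R" by (rule strict_monoI) (rule R_strict)
  then have R_inj: "inj R" by (rule strict_mono_imp_inj_on)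
  have R_ge: "R u \<ge> u" if "u \<ge> 0" for u using R_gap[of 0 u] that R0 by simp
  have R_le: "R u \<le> u" if "u \<le> 0" for u using R_gap[of u 0] that R0 by simp
  have R_surj: "surj R"
  proof -
    have "\<exists>x. R x = y" for y
    proof -
      have "R (-\<bar>y\<bar>) \<le> y" using R_le[of "-\<bar>y\<bar>"] by simp
      moreover have "y \<le> R \<bar>y\<bar>" using R_ge[of "\<bar>y\<bar>"] by simp
      moreover have "continuous_on {-\<bar>y\<bar>..\<bar>y\<bar>} R" using contR by (simp add: continuous_at_imp_continuous_on)
      ultimately show ?thesis using IVT'[of R "-\<bar>y\<bar>" y "\<bar>y\<bar>"] by auto
    qed
    then show ?thesis by (metis surjI)
  qed
  define m where "m = inv R"
  have mR: "m (R u) = u" for u unfolding m_def using R_inj by simp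
  have Rm: "R (m y) = y" for y unfolding m_def using R_surj by (simp add: surj_f_inv_f)
  have dm: "(m has_real_derivative F (m y)) (at y)" for y
  proof -
    have cm: "isCont m (R (m y))"
      by (rule isCont_inverse_function[where d=1]) (use mR contR in auto)
    have "(m has_real_derivative inverse (1 / F (m y))) (at y)"
      by (rule DERIV_inverse_function[where f=R and a="y - 1" and b="y + 1"])
         (use dR F_pos[of "m y"] Rm cm in auto)
    then show ?thesis by simp
  qed
  have Ckm: "Ck n m" for n
  proof (induction n)
    case 0 then show ?case using dm real_differentiable_def by auto
  next
    case (Suc n)
    have "Ck n (\<lambda>y. F (m y))" by (rule Ck_comp[OF CkF Suc])
    then show ?case by (intro Ck_SucI[OF dm])
  qed
  have m_odd: "m (-y) = - m y" for y
  proof -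
    have "-y = R (-(m y))" using R_odd[of "m y"] Rm[of y] by simp
    then have "m (-y) = m (R (-(m y)))" by simp
    then show ?thesis using mR by simp
  qed
  have oe: "odd_ext m = m"
  proof
    fix x show "odd_ext m x = m x" unfolding odd_ext_def using m_odd[of x] by simp
  qed
  have m0: "m 0 = 0" using mR[of 0] R0 by simp
  have m_strict: "m a < m b" if "a < b" for a b
  proof (rule ccontr)
    assume "\<not> m a < m b"
    then have "m b \<le> m a" by simp
    then have "R (m b) \<le> R (m a)" using R_strict[of "m b" "m a"] by (cases "m b = m a") auto
    then show False using Rm that by simp
  qed
  have m_mono: "m a \<le> m b" if "a \<le> b" for a b
    using m_strict[of a b] that by (cases "a = b") auto
  have deriv_m: "deriv m = (\<lambda>y. F (m y))" using dm DERIV_imp_deriv by blast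
  have dd: "deriv (deriv m) r = F' (m r) * F (m r)" for r
  proof -
    have "((\<lambda>y. F (m y)) has_real_derivative F' (m r) * F (m r)) (at r)"
      by (rule DERIV_chain2[OF dF dm])
    then show ?thesis unfolding deriv_m by (rule DERIV_imp_deriv)
  qed
  have Fg0: "F 0 = 1" unfolding F_def g_def using cE by simp
  have G: "curv_G m r = c * E1 (g (m r)) * F (m r)" if "r > 0" for r
  proof -
    have "m r > 0" using m_strict[OF that] m0 by simp
    then show ?thesis unfolding curv_G_def oe dd F'_def by (simp add: field_simps)
  qed
  have vm: "von_mangoldt m"
    unfolding von_mangoldt_def admissible_m_def
  proof (intro conjI allI impI)
    show "smooth_real (odd_ext m)" unfolding oe using Ckm by (rule smoothI)
    show "m 0 = 0" by (rule m0)
    show "deriv (odd_ext m) 0 = 1" unfolding oe deriv_m m0 Fg0 by simp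
    fix r :: real assume "0 < r" then show "0 < m r" using m_strict[of 0 r] m0 by simp
  next
    fix r1 r2 :: real assume r: "0 < r1" "r1 \<le> r2"
    have p1: "m r1 > 0" using m_strict[of 0 r1] m0 r by simp
    have le: "m r1 \<le> m r2" using m_mono r by simp
    have gle: "g (m r2) \<le> g (m r1)" unfolding g_def using p1 le mult_mono[OF le le] by simp
    have a: "E1 (g (m r2)) \<le> E1 (g (m r1))" by (rule E1_mono[OF gle g_le])
    have b: "F (m r2) \<le> F (m r1)" unfolding F_def using E_mono[OF gle] c0 by (simp add: mult_left_mono)
    have "c * E1 (g (m r2)) \<le> c * E1 (g (m r1))" using a c0 by (rule mult_left_mono)
    then have "c * E1 (g (m r2)) * F (m r2) \<le> c * E1 (g (m r1)) * F (m r1)"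
      using b c0 E1_nonneg F_pos[of "m r2"] by (intro mult_mono[OF \<open>c * E1 (g (m r2)) \<le> c * E1 (g (m r1))\<close> b]) auto
    then show "curv_G m r2 \<le> curv_G m r1" using G r by simp
  qed
  have rho: "R 1 > 0" using R_ge[of 1] by simp
  have "deriv (odd_ext m) r = s" if "r \<ge> R 1" for r
  proof -
    have "m r \<ge> 1" using m_mono[OF that] mR[of 1] by simp
    then have "g (m r) \<le> 0" unfolding g_def using mult_mono[of 1 "m r" 1 "m r"] by simp
    then have "F (m r) = s" unfolding F_def using E_nonpos by simp
    then show ?thesis unfolding oe deriv_m by simp
  qed
  then show ?thesis using rho vm by blast
qed

end
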